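(* Assume the Standing Setting below, let $x^*_\rho$ be the limit of the LQP sequence $\{x_k\}_{k\ge0}$, let $P^*=\lim_k P_k$ and $\mathcal{E}_k=P_k-P^*$. If $\mathcal{P}_\rho$ satisfies the KL property at $x^*_\rho$ with desingularizing function $\varphi\in\Psi_\tau$ ($\tau>0$), then there exist $k_1\ge1$ and $C>0$ such that for all $k\ge k_1$, $$\|x_k-x^*_\rho\|\le C\max\{\varphi(\mathcal{E}_k),\sqrt{\mathcal{E}_{k-1}}\}.$$
   Context: Standing Setting. $f:\mathbb{R}^n\to\mathbb{R}$ and $F=(f_1,\dots,f_m)^T:\mathbb{R}^n\to\mathbb{R}^m$ are continuously differentiable; $\|\cdot\|$ is the Euclidean/spectral norm; $J_F(x)\in\mathbb{R}^{m\times n}$ is the Jacobian of $F$. The penalty function is $\mathcal{P}_\rho(x)=f(x)+\frac{\rho}{2}\|F(x)\|^2$ and $\bar{\mathcal{P}}_\rho(x;\bar x)=f(\bar x)+\langle\nabla f(\bar x),x-\bar x\rangle+\frac{\rho}{2}\|F(\bar x)+J_F(\bar x)(x-\bar x)\|^2$. Assumption 1: there is $\rho_0\ge0$ and a value for which the sublevel set $\{x: f(x)+\frac{\rho_0}{2}\|F(x)\|^2\le\cdot\}$ is nonempty and compact; $\bar L:=\inf_x\{f(x)+\frac{\rho_0}{2}\|F(x)\|^2\}$ (finite). Assumption 2 on a compact convex set $\mathcal{S}$: there are constants $L_f,M_F,L_F>0$ with $\|\nabla f(x)-\nabla f(y)\|\le L_f\|x-y\|$, $\|J_F(x)\|\le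 M_F$, $\|J_F(x)-J_F(y)\|\le L_F\|x-y\|$ for all $x,y\in\mathcal{S}$, and LICQ holds on $\mathcal{S}$ (i.e. $J_F(x)$ has full row rank for every $x\in\mathcal{S}$). Assumption 3: there is a finite $\bar\alpha$ with $f(x)\le\bar\alpha$ for all $x$ with $\|F(x)\|\le1$. Parameters: $\rho\ge\max\{1,3\rho_0\}$; $x_0$ satisfies $f(x_0)\le\bar\alpha$ and $\|F(x_0)\|^2\le\min\{1,2c_0/\rho\}$ for some $c_0>0$; $\alpha:=\bar\alpha+c_0$. LQP method: given $x_0$, $\underline\beta>0$, for $k=0,1,\dots$ choose $\beta_{k+1}\ge\underline\beta$ such that $x_{k+1}:=\arg\min_x\{\bar{\mathcal{P}}_\rho(x;x_k)+\frac{\beta_{k+1}}{2}\|x-x_k\|^2\}$ satisfies $\mathcal{P}_\rho(x_{k+1})\le\mathcal{P}_\rho(x_k)-\frac{\beta_{k+1}}{2}\|x_{k+1}-x_k\|^2$. It is assumed that all iterates $x_k$ lie in $\mathcal{S}$ and that $\underline\beta\le\beta_k\le\bar\beta<\infty$ for all $k\ge1$. Notation: $P_k=\mathcal{P}_\rho(x_k)$, $\Delta x_k=x_k-x_{k-1}$. KL property: for $\tau\in(0,\infty]$, $\Psi_\tau$ is the set of continuous concave $\varphi:[0,\tau]\to[0,\infty)$ with $\varphi(0)=0$, $\varphi$ continuously differentiable on $(0,\tau)$ and $\varphi'>0$ there. A continuously differentiable $\Phi$ taking a constant value on a set $\Omega$ satisfies the KL property on $\Omega$ if there exist $\epsilon>0$,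 $\tau>0$, $\varphi\in\Psi_\tau$ such that for every $x^*\in\Omega$ and every $x$ with $\mathrm{dist}(x,\Omega)<\epsilon$ and $\Phi(x^* )<\Phi(x)<\Phi(x^* )+\tau$ one has $\varphi'(\Phi(x)-\Phi(x^* ))\,\|\nabla\Phi(x)\|\ge1$. "KL at a point $x^*$" means KL on $\Omega=\{x^*\}$; $\varphi$ is then called a desingularizing function. *)

theory Defs
  imports "HOL-Analysis.Analysis"
begin

definition Pen :: "(real^'n \<Rightarrow> real) \<Rightarrow> (real^'n \<Rightarrow> real^'m) \<Rightarrow> real \<Rightarrow> real^'n \<Rightarrow> real" where
  "Pen f F \<rho> x = f x + \<rho> / 2 * (norm (F x))\<^sup>2"

definition Pbar :: "(real^'n \<Rightarrow> real) \<Rightarrow> (real^'n \<Rightarrow> real^'n) \<Rightarrow> (real^'n \<Rightarrow> real^'m)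
    \<Rightarrow> (real^'n \<Rightarrow> real^'n^'m) \<Rightarrow> real \<Rightarrow> real^'n \<Rightarrow> real^'n \<Rightarrow> real" where
  "Pbar f gradf F JF \<rho> xb x =
     f xb + gradf xb \<bullet> (x - xb) + \<rho> / 2 * (norm (F xb + JF xb *v (x - xb)))\<^sup>2"

text \<open>The class Psi_tau of desingularizing functions, tau in (0, infinity] (as an ereal).
  Domain [0,tau] is {t. 0 <= t and t <= tau}; the open interval (0,tau) is {t. 0 < t and t < tau}.\<close>
definition Psi :: "ereal \<Rightarrow> (real \<Rightarrow> real) set" where
  "Psi \<tau> = {\<phi>.
     continuous_on {t. 0 \<le> t \<and> ereal t \<le> \<tau>} \<phi> \<and>
     concave_on {t. 0 \<le> t \<and> ereal t \<le> \<tau>} \<phi> \<and>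
     \<phi> 0 = 0 \<and>
     (\<forall>t. 0 \<le> t \<and> ereal t \<le> \<tau> \<longrightarrow> 0 \<le> \<phi> t) \<and>
     (\<forall>t. 0 < t \<and> ereal t < \<tau> \<longrightarrow> \<phi> differentiable (at t) \<and> 0 < deriv \<phi> t) \<and>
     continuous_on {t. 0 < t \<and> ereal t < \<tau>} (deriv \<phi>)}"

definition KL_at :: "('a::real_inner \<Rightarrow> real) \<Rightarrow> 'a \<Rightarrow> ereal \<Rightarrow> (real \<Rightarrow> real) \<Rightarrow> bool" where
  "KL_at \<Phi> xs \<tau> \<phi> \<longleftrightarrow> 0 < \<tau> \<and> \<phi> \<in> Psi \<tau> \<and>
     (\<exists>\<epsilon>>0. \<forall>x g. dist x xs < \<epsilon> \<and> \<Phi> xs < \<Phi> x \<and> ereal (\<Phi> x) < ereal (\<Phi> xs) + \<tau>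
        \<and> GDERIV \<Phi> x :> g \<longrightarrow> 1 \<le> deriv \<phi> (\<Phi> x - \<Phi> xs) * norm g)"

end

theory Submission
  imports Defs
begin


lemma transpose_norm_le:
  fixes A :: "real^'n^'m" and v :: "real^'m"
  shows "norm (transpose A *v v) \<le> onorm ((*v) A) * norm v"
proof -
  let ?w = "transpose A *v v"
  have "(norm ?w)\<^sup>2 = ?w \<bullet> ?w" by (simp add: power2_norm_eq_inner)
  also have "\<dots> = v \<bullet> (A *v ?w)"
    by (metis dot_lmul_matrix transpose_matrix_vector)
  also have "\<dots> \<le> norm v * norm (A *v ?w)" by (rule norm_cauchy_schwarz)
  also have "\<dots> \<le> norm v * (onorm ((*v) A) * norm ?w)"
    by (intro mult_left_mono onorm) auto
  finally have *: "(norm ?w)\<^sup>2 \<le> onorm ((*v) A) * norm v * norm ?w" by (simp add: algebra_simps)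
  show ?thesis
  proof (cases "norm ?w = 0")
    case True then show ?thesis
      using onorm_pos_le[OF matrix_vector_mul_bounded_linear, of A] by (simp)
  next
    case False
    then have "norm ?w > 0" by simp
    with * show ?thesis by (simp add: power2_eq_square mult.commute)
  qed
qed

lemma gderiv_pen:
  fixes f :: "real^'n \<Rightarrow> real" and F :: "real^'n \<Rightarrow> real^'m"
  assumes "GDERIV f y :> g" "(F has_derivative (\<lambda>h. J *v h)) (at y)"
  shows "GDERIV (Pen f F \<rho>) y :> (g + \<rho> *\<^sub>R (transpose J *v F y))"
proof -
  have e: "Pen f F \<rho> = (\<lambda>z. f z + \<rho> / 2 * (F z \<bullet> F z))"
    by (rule ext) (simp add: Pen_def power2_norm_eq_inner)
  have "((\<lambda>z. f z + \<rho> / 2 * (F z \<bullet> F z)) has_derivative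
      (\<lambda>h. h \<bullet> g + \<rho> / 2 * ((J *v h) \<bullet> F y + F y \<bullet> (J *v h)))) (at y)"
    using assms unfolding gderiv_def
    by (intro derivative_eq_intros) auto
  moreover have "(\<lambda>h. h \<bullet> g + \<rho> / 2 * ((J *v h) \<bullet> F y + F y \<bullet> (J *v h)))
      = (\<lambda>h. h \<bullet> (g + \<rho> *\<^sub>R (transpose J *v F y)))"
    by (rule ext) (simp add: inner_add_right inner_commute[of _ "F y v* J"] inner_commute[of "J *v _" "F y"] dot_lmul_matrix algebra_simps)
  ultimately show ?thesis unfolding gderiv_def e by simp
qed

lemma opt_zero:
  fixes f :: "real^'n \<Rightarrow> real" and F :: "real^'n \<Rightarrow> real^'m"
  assumes "\<And>y. Pbar f gradf F JF \<rho> x0 x1 + \<beta>/2*(norm(x1-x0))\<^sup>2 \<le> Pbar f gradf F JF \<rho> x0 y + \<beta>/2*(norm(y-x0))\<^sup>2"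
  shows "gradf x0 + \<rho> *\<^sub>R (transpose (JF x0) *v (F x0 + JF x0 *v (x1 - x0))) + \<beta> *\<^sub>R (x1 - x0) = 0"
proof -
  define J where "J = JF x0"
  define r where "r = F x0 + J *v (x1 - x0)"
  define G where "G = gradf x0 + \<rho> *\<^sub>R (transpose J *v r) + \<beta> *\<^sub>R (x1 - x0)"
  define h where "h = (\<lambda>y. f x0 + gradf x0 \<bullet> (y - x0) + \<rho> / 2 * ((F x0 + J *v (y - x0)) \<bullet> (F x0 + J *v (y - x0)))
      + \<beta>/2 * ((y - x0) \<bullet> (y - x0)))"
  have lin: "((\<lambda>y. J *v (y - x0)) has_derivative (\<lambda>v. J *v v)) (at x1)"
  proof -
    have "((\<lambda>y. J *v y - J *v x0) has_derivative (\<lambda>v. J *v v - 0)) (at x1)"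
      by (intro derivative_intros bounded_linear_imp_has_derivative) auto
    then show ?thesis by (simp add: matrix_vector_mult_diff_distrib)
  qed
  have hP: "h y = Pbar f gradf F JF \<rho> x0 y + \<beta>/2*(norm(y-x0))\<^sup>2" for y
    by (simp add: h_def Pbar_def J_def power2_norm_eq_inner)
  have "(h has_derivative (\<lambda>v. gradf x0 \<bullet> v + \<rho> / 2 * ((J *v v) \<bullet> r + r \<bullet> (J *v v))
      + \<beta>/2 * (v \<bullet> (x1 - x0) + (x1 - x0) \<bullet> v))) (at x1)"
    unfolding h_def r_def
    apply (rule has_derivative_eq_rhs)
     apply (rule lin derivative_intros)+
    apply (rule ext)
    apply (simp add: algebra_simps)
    done
  moreover have "(\<lambda>v. gradf x0 \<bullet> v + \<rho> / 2 * ((J *v v) \<bullet> r + r \<bullet> (J *v v))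
      + \<beta>/2 * (v \<bullet> (x1 - x0) + (x1 - x0) \<bullet> v)) = (\<lambda>v. v \<bullet> G)"
    by (rule ext) (simp add: G_def inner_add_right inner_commute[of _ "r v* J"] inner_commute[of "J *v _" r]
         inner_commute[of _ "gradf x0"] inner_commute[of _ "x1 - x0"] dot_lmul_matrix algebra_simps inner_diff_right inner_diff_left inner_commute[of x1] inner_commute[of x0])
  ultimately have d: "(h has_derivative (\<lambda>v. v \<bullet> G)) (at x1)" by simp
  have "eventually (\<lambda>y. h x1 \<le> h y) (at x1)"
    using assms by (simp add: hP)
  from has_derivative_local_min[OF d this] have "G \<bullet> G = 0" by meson
  then show ?thesis by (simp add: G_def J_def r_def)
qed

lemma transpose_minus: "transpose (A - B) = transpose A - (transpose B :: real^'n^'m)"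
  by (simp add: transpose_def vec_eq_iff)

lemma rel_err:
  fixes f :: "real^'n \<Rightarrow> real" and F :: "real^'n \<Rightarrow> real^'m" and JF :: "real^'n \<Rightarrow> real^'n^'m"
  assumes FD: "\<And>y. (F has_derivative (\<lambda>h. JF y *v h)) (at y)"
    and S: "convex S" and x0: "x0 \<in> S" and x1: "x1 \<in> S"
    and Lg: "\<And>y z. y \<in> S \<Longrightarrow> z \<in> S \<Longrightarrow> norm (gradf y - gradf z) \<le> Lf * norm (y - z)"
    and MJ: "\<And>y. y \<in> S \<Longrightarrow> onorm (\<lambda>h. JF y *v h) \<le> MF"
    and LJ: "\<And>y z. y \<in> S \<Longrightarrow> z \<in> S \<Longrightarrow> onorm (\<lambda>h. (JF y - JF z) *v h) \<le> LF * norm (y - z)"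
    and Fb: "\<And>y. y \<in> S \<Longrightarrow> norm (F y) \<le> B"
    and opt: "\<And>y. Pbar f gradf F JF \<rho> x0 x1 + \<beta>/2*(norm(x1-x0))\<^sup>2 \<le> Pbar f gradf F JF \<rho> x0 y + \<beta>/2*(norm(y-x0))\<^sup>2"
    and rho: "\<rho> \<ge> 0" and beta: "0 \<le> \<beta>" "\<beta> \<le> bu"
  shows "norm (gradf x1 + \<rho> *\<^sub>R (transpose (JF x1) *v F x1)) \<le> (Lf + \<rho> * (LF * B + 2 * MF * MF) + bu) * norm (x1 - x0)"
proof -
  define d where "d = x1 - x0"
  define J0 where "J0 = JF x0"
  define J1 where "J1 = JF x1"
  have Z: "gradf x0 + \<rho> *\<^sub>R (transpose J0 *v (F x0 + J0 *v d)) + \<beta> *\<^sub>R d = 0"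
    using opt_zero[OF opt] by (simp add: J0_def d_def)
  have eq: "gradf x1 + \<rho> *\<^sub>R (transpose J1 *v F x1) =
     (gradf x1 - gradf x0) + \<rho> *\<^sub>R (transpose (J1 - J0) *v F x1 + transpose J0 *v ((F x1 - F x0) - J0 *v d)) - \<beta> *\<^sub>R d"
    using Z by (simp add: transpose_minus algebra_simps matrix_vector_mult_diff_rdistrib)
  have n1: "norm (gradf x1 - gradf x0) \<le> Lf * norm d" using Lg[OF x1 x0] by (simp add: d_def)
  have n2: "norm (transpose (J1 - J0) *v F x1) \<le> LF * norm d * B"
  proof -
    have "norm (transpose (J1 - J0) *v F x1) \<le> onorm ((*v) (J1 - J0)) * norm (F x1)"
      by (rule transpose_norm_le)
    also have "\<dots> \<le> (LF * norm d) * B"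
      apply (rule mult_mono)
      using LJ[OF x1 x0] Fb[OF x1] onorm_pos_le[OF matrix_vector_mul_bounded_linear, of "J1 - J0"]
      by (auto simp: J1_def J0_def d_def)
    finally show ?thesis .
  qed
  have MF0: "0 \<le> MF" using MJ[OF x0] onorm_pos_le[OF matrix_vector_mul_bounded_linear, of "JF x0"] by simp
  have dF: "norm (F x1 - F x0) \<le> MF * norm d"
    unfolding d_def
    by (rule differentiable_bound[OF S _ MJ x1 x0]) (rule has_derivative_at_withinI[OF FD])
  have dJ: "norm (J0 *v d) \<le> MF * norm d"
    using onorm[OF matrix_vector_mul_bounded_linear, of J0 d] MJ[OF x0]
    by (metis J0_def mult_right_mono norm_ge_zero order_trans)
  have n3: "norm (transpose J0 *v ((F x1 - F x0) - J0 *v d)) \<le> MF * (2 * MF * norm d)"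
  proof -
    have "norm (transpose J0 *v ((F x1 - F x0) - J0 *v d)) \<le> onorm ((*v) J0) * norm ((F x1 - F x0) - J0 *v d)"
      by (rule transpose_norm_le)
    also have "\<dots> \<le> MF * (2 * MF * norm d)"
      apply (rule mult_mono)
      using MJ[OF x0] dF dJ norm_triangle_ineq4[of "F x1 - F x0" "J0 *v d"] MF0
      by (auto simp: J0_def)
    finally show ?thesis .
  qed
  have "norm (gradf x1 + \<rho> *\<^sub>R (transpose J1 *v F x1)) \<le>
     norm (gradf x1 - gradf x0) + \<rho> * (norm (transpose (J1 - J0) *v F x1) + norm (transpose J0 *v ((F x1 - F x0) - J0 *v d))) + \<beta> * norm d"
    unfolding eq using rho beta
    by (smt (verit) norm_scaleR norm_triangle_ineq norm_triangle_ineq4 mult_left_mono)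
  also have "\<dots> \<le> Lf * norm d + \<rho> * (LF * norm d * B + MF * (2 * MF * norm d)) + bu * norm d"
    using n1 n2 n3 rho beta by (intro add_mono mult_left_mono mult_right_mono) auto
  finally show ?thesis by (simp add: J1_def d_def algebra_simps)
qed



lemma tangent:
  assumes phi: "\<phi> \<in> Psi \<tau>" and c: "0 < c" "ereal c < \<tau>" and s: "0 \<le> s" "s \<le> c"
  shows "deriv \<phi> c * (c - s) \<le> \<phi> c - \<phi> s"
proof -
  obtain T where T: "c < T" "ereal T < \<tau>" using ereal_dense2[OF c(2)] by auto
  have sub: "{0..T} \<subseteq> {t. 0 \<le> t \<and> ereal t \<le> \<tau>}"
  proof
    fix t assume "t \<in> {0..T}"
    then have a: "0 \<le> t" and b: "ereal t \<le> ereal T" by auto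
    have "ereal t \<le> \<tau>" using order.trans[OF b less_imp_le[OF T(2)]] .
    with a show "t \<in> {t. 0 \<le> t \<and> ereal t \<le> \<tau>}" by simp
  qed
  have conc: "concave_on {t. 0 \<le> t \<and> ereal t \<le> \<tau>} \<phi>" using phi by (simp add: Psi_def)
  have cv: "convex_on {0..T} (\<lambda>t. - \<phi> t)"
    using convex_on_subset[OF conc[unfolded concave_on_def] sub] by simp
  have "\<phi> differentiable (at c)" using phi c by (simp add: Psi_def)
  then have dd: "(\<phi> has_real_derivative deriv \<phi> c) (at c)"
    using DERIV_deriv_iff_real_differentiable by blast
  have "((\<lambda>t. - \<phi> t) has_real_derivative - deriv \<phi> c) (at c within {0..T})"
    using DERIV_minus[OF dd] by (rule has_field_derivative_at_within)
  from convex_on_imp_above_tangent[OF cv connected_Icc _ _ this, of s] c s T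
  show ?thesis by (auto simp: algebra_simps)
qed

lemma amgm_step:
  fixes p b q s D bl :: real
  assumes "1 \<le> p * b * q" "p > 0" "b > 0" "q \<ge> 0" "p * (bl / 2) * s\<^sup>2 \<le> D" "bl > 0" "s \<ge> 0"
  shows "2 * s \<le> q + (2 * b / bl) * D"
proof -
  have "s\<^sup>2 \<le> s\<^sup>2 * (p * b * q)" using assms(1) by (simp add: mult_le_cancel_left1)
  also have "\<dots> = (b * q) * (p * s\<^sup>2)" by (simp add: algebra_simps)
  also have "\<dots> \<le> (b * q) * ((2 / bl) * D)"
  proof (rule mult_left_mono)
    have "p * s\<^sup>2 = (2 / bl) * (p * (bl / 2) * s\<^sup>2)" using assms(6) by (simp add: field_simps)
    also have "\<dots> \<le> (2 / bl) * D" using assms(5,6) by (intro mult_left_mono) auto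
    finally show "p * s\<^sup>2 \<le> (2 / bl) * D" .
  qed (use assms in auto)
  finally have *: "s\<^sup>2 \<le> q * ((2 * b / bl) * D)" by (simp add: algebra_simps)
  have "0 \<le> p * (bl / 2) * s\<^sup>2" using assms by simp
  then have "0 \<le> D" using assms(5) by linarith
  then have D0: "0 \<le> (2 * b / bl) * D" using assms by simp
  define X where "X = (2 * b / bl) * D"
  have sq: "(q + X)\<^sup>2 = 4 * (q * X) + (q - X)\<^sup>2" by (simp add: power2_eq_square algebra_simps)
  have "(2 * s)\<^sup>2 = 4 * s\<^sup>2" by (simp add: power2_eq_square)
  also have "\<dots> \<le> 4 * (q * X)" using * by (simp add: X_def)
  also have "\<dots> \<le> (q + X)\<^sup>2" unfolding sq by simp
  finally have "(2 * s)\<^sup>2 \<le> (q + (2 * b / bl) * D)\<^sup>2" by (simp add: X_def)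
  then show ?thesis by (rule power2_le_imp_le) (use assms(4) D0 in linarith)
qed

lemma sum_bound:
  fixes a :: "nat \<Rightarrow> real" and ph :: "nat \<Rightarrow> real"
  assumes step: "\<And>k. k \<ge> K \<Longrightarrow> 2 * a k \<le> a (k - 1) + M * (ph k - ph (Suc k))"
    and nn: "\<And>k. a k \<ge> 0" "\<And>k. k \<ge> K \<Longrightarrow> ph k \<ge> 0" and M: "M \<ge> 0" and K: "K \<ge> 1"
  shows "(\<Sum>k\<in>{K..K+n}. a k) \<le> a (K - 1) + M * ph K"
proof -
  have "(\<Sum>k\<in>{K..K+n}. a k) + a (K + n) \<le> a (K - 1) + M * ph K - M * ph (Suc (K + n))"
  proof (induction n)
    case 0 then show ?case using step[of K] by (simp add: algebra_simps)
  next
    case (Suc n)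
    have "(\<Sum>k\<in>{K..K+Suc n}. a k) = (\<Sum>k\<in>{K..K+n}. a k) + a (K + Suc n)" by simp
    moreover have "2 * a (K + Suc n) \<le> a (K + n) + M * (ph (K + Suc n) - ph (Suc (K + Suc n)))"
      using step[of "K + Suc n"] by simp
    ultimately show ?case using Suc by (simp add: algebra_simps)
  qed
  moreover have "M * ph (Suc (K + n)) \<ge> 0" using nn(2)[of "Suc (K+n)"] M by simp
  ultimately show ?thesis using nn(1)[of "K+n"] by linarith
qed

lemma tele:
  fixes x :: "nat \<Rightarrow> 'a::real_normed_vector"
  shows "norm (x (Suc (K + n)) - x K) \<le> (\<Sum>k\<in>{K..K+n}. norm (x (Suc k) - x k))"
proof (induction n)
  case 0 then show ?case by simp
next
  case (Suc n)
  have "norm (x (Suc (K + Suc n)) - x K) \<le> norm (x (Suc (K + Suc n)) - x (K + Suc n)) + norm (x (Suc (K + n)) - x K)"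
    using norm_triangle_ineq[of "x (Suc (K + Suc n)) - x (K + Suc n)" "x (Suc (K + n)) - x K"] by simp
  then show ?case using Suc by (simp add: add.commute)
qed



theorem theorem3:
  fixes f :: "real^'n \<Rightarrow> real" and gradf :: "real^'n \<Rightarrow> real^'n"
    and F :: "real^'n \<Rightarrow> real^'m" and JF :: "real^'n \<Rightarrow> real^'n^'m"
    and \<rho> \<rho>0 \<alpha>bar c0 \<beta>low \<beta>up Lf MF LF :: real
    and S :: "(real^'n) set"
    and x :: "nat \<Rightarrow> real^'n" and \<beta> :: "nat \<Rightarrow> real"
    and xs :: "real^'n" and Pstar :: real
    and \<tau> :: ereal and \<phi> :: "real \<Rightarrow> real"
  assumes f_C1: "\<And>y. GDERIV f y :> gradf y" "continuous_on UNIV gradf"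
    and F_C1: "\<And>y. (F has_derivative (\<lambda>h. JF y *v h)) (at y)" "continuous_on UNIV JF"
    \<comment> \<open>Assumption 1\<close>
    and A1: "\<rho>0 \<ge> 0"
      "\<exists>c. {y. f y + \<rho>0 / 2 * (norm (F y))\<^sup>2 \<le> c} \<noteq> {} \<and>
           compact {y. f y + \<rho>0 / 2 * (norm (F y))\<^sup>2 \<le> c}"
      "bdd_below (range (\<lambda>y. f y + \<rho>0 / 2 * (norm (F y))\<^sup>2))"
    \<comment> \<open>Assumption 2\<close>
    and A2: "compact S" "convex S" "Lf > 0" "MF > 0" "LF > 0"
      "\<And>y z. y \<in> S \<Longrightarrow> z \<in> S \<Longrightarrow> norm (gradf y - gradf z) \<le> Lf * norm (y - z)"
      "\<And>y. y \<in> S \<Longrightarrow> onorm (\<lambda>h. JF y *v h) \<le> MF"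
      "\<And>y z. y \<in> S \<Longrightarrow> z \<in> S \<Longrightarrow> onorm (\<lambda>h. (JF y - JF z) *v h) \<le> LF * norm (y - z)"
      "\<And>y. y \<in> S \<Longrightarrow> rank (JF y) = CARD('m)"
    \<comment> \<open>Assumption 3\<close>
    and A3: "\<And>y. norm (F y) \<le> 1 \<Longrightarrow> f y \<le> \<alpha>bar"
    \<comment> \<open>Parameters\<close>
    and par: "\<rho> \<ge> max 1 (3 * \<rho>0)" "c0 > 0" "f (x 0) \<le> \<alpha>bar"
      "(norm (F (x 0)))\<^sup>2 \<le> min 1 (2 * c0 / \<rho>)"
    \<comment> \<open>LQP method\<close>
    and lqp: "\<beta>low > 0"
      "\<And>k. \<beta> (Suc k) \<ge> \<beta>low"
      "\<And>k y. Pbar f gradf F JF \<rho> (x k) (x (Suc k)) + \<beta> (Suc k) / 2 * (norm (x (Suc k) - x k))\<^sup>2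
              \<le> Pbar f gradf F JF \<rho> (x k) y + \<beta> (Suc k) / 2 * (norm (y - x k))\<^sup>2"
      "\<And>k. Pen f F \<rho> (x (Suc k)) \<le> Pen f F \<rho> (x k) - \<beta> (Suc k) / 2 * (norm (x (Suc k) - x k))\<^sup>2"
    and iter_S: "\<And>k. x k \<in> S"
    and beta_bd: "\<And>k. k \<ge> 1 \<Longrightarrow> \<beta>low \<le> \<beta> k \<and> \<beta> k \<le> \<beta>up"
    \<comment> \<open>limits\<close>
    and lim_x: "x \<longlonglongrightarrow> xs"
    and lim_P: "(\<lambda>k. Pen f F \<rho> (x k)) \<longlonglongrightarrow> Pstar"
    \<comment> \<open>KL property at xs\<close>
    and KL: "KL_at (Pen f F \<rho>) xs \<tau> \<phi>"
  shows "\<exists>k1\<ge>1. \<exists>C>0. \<forall>k\<ge>k1.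
           norm (x k - xs) \<le> C * max (\<phi> (Pen f F \<rho> (x k) - Pstar)) (sqrt (Pen f F \<rho> (x (k - 1)) - Pstar))"
proof -
  define P where "P k = Pen f F \<rho> (x k)" for k
  define E where "E k = P k - Pstar" for k
  define a where "a k = norm (x (Suc k) - x k)" for k
  define G where "G y = gradf y + \<rho> *\<^sub>R (transpose (JF y) *v F y)" for y
  have rho0: "\<rho> \<ge> 1" using par(1) by simp
  have bpos: "\<beta> (Suc k) > 0" for k using lqp(1) lqp(2)[of k] by simp
  have dec1: "\<beta>low / 2 * (a k)\<^sup>2 \<le> P k - P (Suc k)" for k
  proof -
    have "\<beta>low / 2 * (a k)\<^sup>2 \<le> \<beta> (Suc k) / 2 * (a k)\<^sup>2"
      using lqp(2)[of k] by (intro mult_right_mono) auto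
    then show ?thesis using lqp(4)[of k] by (simp add: P_def a_def)
  qed
  have decP: "P (Suc k) \<le> P k" for k
  proof -
    have "0 \<le> \<beta>low / 2 * (a k)\<^sup>2" using lqp(1) by simp
    then show ?thesis using dec1[of k] by linarith
  qed
  have decseqP: "decseq P" by (rule decseq_SucI) (rule decP)
  have limP: "P \<longlonglongrightarrow> Pstar" using lim_P by (simp add: P_def[abs_def])
  have E0: "E k \<ge> 0" for k
    using decseq_ge[OF decseqP limP] by (simp add: E_def)
  have sq: "(a k)\<^sup>2 \<le> (2 / \<beta>low) * (E k - E (Suc k))" for k
  proof -
    have "(a k)\<^sup>2 = (2 / \<beta>low) * (\<beta>low / 2 * (a k)\<^sup>2)" using lqp(1) by simp
    also have "\<dots> \<le> (2 / \<beta>low) * (E k - E (Suc k))"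
      using dec1[of k] lqp(1) by (intro mult_left_mono) (auto simp: E_def)
    finally show ?thesis .
  qed
  have a0: "a k \<ge> 0" for k by (simp add: a_def)
  have contf: "isCont f y" for y
    using f_C1(1)[of y] unfolding gderiv_def by (rule has_derivative_continuous)
  have contF: "isCont F y" for y
    using F_C1(1)[of y] by (rule has_derivative_continuous)
  have contPen: "isCont (Pen f F \<rho>) y" for y
    unfolding Pen_def[abs_def] using contf contF by (intro continuous_intros) auto
  have "(\<lambda>k. Pen f F \<rho> (x k)) \<longlonglongrightarrow> Pen f F \<rho> xs"
    using isCont_tendsto_compose[OF contPen lim_x] .
  then have Pxs: "Pen f F \<rho> xs = Pstar" using lim_P LIMSEQ_unique by blast
  have "compact (F ` S)"
    using compact_continuous_image[OF _ A2(1)] contF continuous_at_imp_continuous_on by blast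
  then obtain B where B: "\<And>y. y \<in> S \<Longrightarrow> norm (F y) \<le> B"
    using compact_imp_bounded bounded_iff by (metis imageI)
  have B0: "B \<ge> 0" using B[OF iter_S[of 0]] norm_ge_zero order_trans by blast
  define b where "b = Lf + \<rho> * (LF * B + 2 * MF * MF) + \<beta>up"
  have bup: "\<beta>up > 0" using beta_bd[of 1] lqp(1) by simp
  have b0: "b > 0"
  proof -
    have "0 \<le> \<rho> * (LF * B + 2 * MF * MF)" using A2(4,5) rho0 B0 by simp
    then show ?thesis unfolding b_def using A2(3) bup by linarith
  qed
  have rel: "norm (G (x (Suc k))) \<le> b * a k" for k
    unfolding G_def b_def a_def
    by (rule rel_err[OF F_C1(1) A2(2) iter_S iter_S A2(6) A2(7) A2(8) B lqp(3)])
       (use rho0 bpos[of k] beta_bd[of "Suc k"] in auto)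
  have gd: "GDERIV (Pen f F \<rho>) y :> G y" for y
    unfolding G_def by (rule gderiv_pen[OF f_C1(1) F_C1(1)])
  from KL obtain \<epsilon> where tau: "0 < \<tau>" and phi: "\<phi> \<in> Psi \<tau>" and eps: "\<epsilon> > 0"
    and kl: "\<And>y g. dist y xs < \<epsilon> \<Longrightarrow> Pen f F \<rho> xs < Pen f F \<rho> y \<Longrightarrow>
          ereal (Pen f F \<rho> y) < ereal (Pen f F \<rho> xs) + \<tau> \<Longrightarrow> GDERIV (Pen f F \<rho>) y :> g \<Longrightarrow>
          1 \<le> deriv \<phi> (Pen f F \<rho> y - Pen f F \<rho> xs) * norm g"
    unfolding KL_at_def by blast
  have ev1: "eventually (\<lambda>k. dist (x k) xs < \<epsilon>) sequentially"
    using tendstoD[OF lim_x eps] .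
  have "E \<longlonglongrightarrow> 0" using tendsto_diff[OF limP tendsto_const[of Pstar]] by (simp add: E_def[abs_def])
  then have "(\<lambda>k. ereal (E k)) \<longlonglongrightarrow> ereal 0" by simp
  from order_tendstoD(2)[OF this] tau have ev2: "eventually (\<lambda>k. ereal (E k) < \<tau>) sequentially"
    by (simp add: zero_ereal_def)
  obtain K0 where K0: "\<And>k. k \<ge> K0 \<Longrightarrow> dist (x k) xs < \<epsilon> \<and> ereal (E k) < \<tau>"
    using eventually_conj[OF ev1 ev2] unfolding eventually_sequentially by blast
  define M where "M = 2 * b / \<beta>low"
  have M0: "M \<ge> 0" using b0 lqp(1) by (simp add: M_def)
  have phinn: "\<phi> (E k) \<ge> 0" if "k \<ge> K0" for k
    using phi K0[OF that] E0[of k] by (auto simp: Psi_def)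
  have step: "2 * a k \<le> a (k - 1) + M * (\<phi> (E k) - \<phi> (E (Suc k)))" if k: "k \<ge> Suc K0" for k
  proof (cases "E k = 0")
    case True
    then have "E (Suc k) = 0" using E0[of "Suc k"] decP[of k] by (simp add: E_def)
    then have "(a k)\<^sup>2 \<le> 0" using sq[of k] True by simp
    then have "a k = 0" by simp
    then show ?thesis using True \<open>E (Suc k) = 0\<close> a0[of "k-1"] by simp
  next
    case False
    then have Ep: "E k > 0" using E0[of k] by simp
    have kk: "k = Suc (k - 1)" using k by simp
    have Kk: "dist (x k) xs < \<epsilon>" "ereal (E k) < \<tau>" using K0[of k] k by auto
    have lt: "ereal (Pen f F \<rho> (x k)) < ereal (Pen f F \<rho> xs) + \<tau>"
    proof (cases \<tau>)
      case (real t) then show ?thesis using Kk(2) by (simp add: E_def P_def Pxs)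
    qed (use tau in auto)
    have "1 \<le> deriv \<phi> (E k) * norm (G (x k))"
      using kl[OF Kk(1) _ lt gd] Ep by (simp add: Pxs E_def P_def)
    also have "\<dots> \<le> deriv \<phi> (E k) * (b * a (k - 1))"
    proof (rule mult_left_mono)
      show "norm (G (x k)) \<le> b * a (k - 1)" using rel[of "k-1"] kk by metis
      show "0 \<le> deriv \<phi> (E k)" using phi Ep Kk(2) by (auto simp: Psi_def less_imp_le)
    qed
    finally have k1: "1 \<le> deriv \<phi> (E k) * b * a (k - 1)" by (simp add: mult.assoc)
    have dpos: "deriv \<phi> (E k) > 0" using phi Ep Kk(2) by (auto simp: Psi_def)
    have tg: "deriv \<phi> (E k) * (E k - E (Suc k)) \<le> \<phi> (E k) - \<phi> (E (Suc k))"
      by (rule tangent[OF phi Ep Kk(2) E0]) (use decP[of k] in \<open>simp add: E_def\<close>)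
    have "deriv \<phi> (E k) * (\<beta>low / 2) * (a k)\<^sup>2 \<le> \<phi> (E k) - \<phi> (E (Suc k))"
    proof -
      have "\<beta>low / 2 * (a k)\<^sup>2 \<le> E k - E (Suc k)" using dec1[of k] by (simp add: E_def)
      then have "deriv \<phi> (E k) * (\<beta>low / 2 * (a k)\<^sup>2) \<le> deriv \<phi> (E k) * (E k - E (Suc k))"
        using dpos by (intro mult_left_mono) auto
      then have "deriv \<phi> (E k) * (\<beta>low / 2) * (a k)\<^sup>2 \<le> deriv \<phi> (E k) * (E k - E (Suc k))"
        by (simp only: mult.assoc)
      then show ?thesis using tg by linarith
    qed
    from amgm_step[OF k1 dpos b0 a0 this lqp(1) a0]
    show ?thesis by (simp add: M_def)
  qed
  define C where "C = sqrt (2 / \<beta>low) + M"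
  have C0: "C > 0" using lqp(1) M0 by (simp add: C_def add_pos_nonneg)
  show ?thesis
  proof (intro exI[of _ "Suc K0"] conjI exI[of _ C] allI impI)
    show "1 \<le> Suc K0" by simp
    show "0 < C" by (rule C0)
    fix K assume K: "Suc K0 \<le> K"
    have sb: "(\<Sum>k\<in>{K..K+n}. a k) \<le> a (K - 1) + M * \<phi> (E K)" for n
      by (rule sum_bound[OF step a0 phinn M0]) (use K in auto)
    have lim1: "(\<lambda>n. norm (x (Suc (K + n)) - x K)) \<longlonglongrightarrow> norm (xs - x K)"
    proof -
      have "(\<lambda>n. x (n + Suc K)) \<longlonglongrightarrow> xs" by (rule LIMSEQ_ignore_initial_segment[OF lim_x])
      then have "(\<lambda>n. norm (x (n + Suc K) - x K)) \<longlonglongrightarrow> norm (xs - x K)"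
        by (intro tendsto_intros)
      then show ?thesis by (simp add: add.commute)
    qed
    have "norm (xs - x K) \<le> a (K - 1) + M * \<phi> (E K)"
    proof (rule LIMSEQ_le_const2[OF lim1], intro exI allI impI)
      fix n
      show "norm (x (Suc (K + n)) - x K) \<le> a (K - 1) + M * \<phi> (E K)"
        using tele[of x K n] sb[of n] by (simp add: a_def)
    qed
    moreover have "a (K - 1) \<le> sqrt (2 / \<beta>low) * sqrt (E (K - 1))"
    proof -
      have "(a (K - 1))\<^sup>2 \<le> (2 / \<beta>low) * E (K - 1)"
      proof -
        have "(a (K - 1))\<^sup>2 \<le> (2 / \<beta>low) * (E (K - 1) - E (Suc (K - 1)))" by (rule sq)
        also have "\<dots> \<le> (2 / \<beta>low) * E (K - 1)"
          using E0[of "Suc (K - 1)"] lqp(1) by (intro mult_left_mono) auto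
        finally show ?thesis .
      qed
      then have "sqrt ((a (K - 1))\<^sup>2) \<le> sqrt ((2 / \<beta>low) * E (K - 1))"
        using real_sqrt_le_mono by blast
      moreover have "sqrt ((a (K - 1))\<^sup>2) = a (K - 1)" using a0[of "K - 1"] by simp
      moreover have "sqrt ((2 / \<beta>low) * E (K - 1)) = sqrt (2 / \<beta>low) * sqrt (E (K - 1))"
        by (rule real_sqrt_mult)
      ultimately show ?thesis by simp
    qed
    ultimately have fin: "norm (x K - xs) \<le> sqrt (2 / \<beta>low) * sqrt (E (K - 1)) + M * \<phi> (E K)"
      by (simp add: norm_minus_commute)
    define m where "m = max (\<phi> (E K)) (sqrt (E (K - 1)))"
    have "sqrt (2 / \<beta>low) * sqrt (E (K - 1)) + M * \<phi> (E K) \<le> sqrt (2 / \<beta>low) * m + M * m"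
      unfolding m_def using M0 lqp(1) by (intro add_mono mult_left_mono) auto
    also have "\<dots> = C * m" by (simp add: C_def algebra_simps)
    finally show "norm (x K - xs) \<le> C * max (\<phi> (Pen f F \<rho> (x K) - Pstar)) (sqrt (Pen f F \<rho> (x (K - 1)) - Pstar))"
      using fin by (simp add: m_def E_def P_def)
  qed
qed

end
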